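(* Run xOrder with the criterion $F=\widehat G_\infty$ (the $\lambda\to\infty$ limit of the objective). Then its output $o^*=o^*(n^a,n^b)$ satisfies $$\Delta\mathrm{xAUC}(o^* )\le\max\Big(\frac{1}{n_1^a},\frac{1}{n_1^b}\Big).$$
   Context: Setting: two disjoint finite groups $a$, $b$ of samples, each sample $u$ having label $Y_u\in\{0,1\}$; $n^a,n^b$ group sizes, $n_1^a,n_0^a$ numbers of label-1/label-0 samples in $a$ (similarly for $b$), all $\ge1$, $k_{a,b}=n_1^an_0^b$, $k_{b,a}=n_0^an_1^b$. Fixed within-group rankings $\mathrm{p}^a=(\mathrm{p}^{a(1)},\dots,\mathrm{p}^{a(n^a)})$, $\mathrm{p}^b=(\mathrm{p}^{b(1)},\dots,\mathrm{p}^{b(n^b)})$. A cross-group ordering is a ranked list of all samples of $a\cup b$ whose restrictions to $a,b$ are $\mathrm{p}^a,\mathrm{p}^b$; $\mathrm{xAUC}_o(a,b)$ is the fraction of pairs (label-1 sample of $a$, label-0 sample of $b$) in which the first is ranked above the second, $\mathrm{xAUC}_o(b,a)$ symmetrically, $\Delta\mathrm{xAUC}(o)=|\mathrm{xAUC}_o(a,b)-\mathrm{xAUC}_o(b,a)|$. Partial orderings: for $0\le i\le n^a$, $0\le j\le n^b$, an $(i,j)$-partial ordering is a ranked list of $\mathrm{p}^{a(1)},\dots,\mathrm{p}^{a(i)},\mathrm{p}^{b(1)},\dots,\mathrm{p}^{b(j)}$ preserving within-group orders. $H_{ab}(o)$ is the number of pairs $(k,h)$ with $1\le k\le i$, $1\le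 h\le n^b$, $Y_{\mathrm{p}^{a(k)}}=1$, $Y_{\mathrm{p}^{b(h)}}=0$, and either $h>j$ or ($h\le j$ and $\mathrm{p}^{a(k)}$ precedes $\mathrm{p}^{b(h)}$ in $o$); $H_{ba}(o)$ is the number of pairs $(h,k)$ with $1\le h\le j$, $1\le k\le n^a$, $Y_{\mathrm{p}^{b(h)}}=1$, $Y_{\mathrm{p}^{a(k)}}=0$, and either $k>i$ or ($k\le i$ and $\mathrm{p}^{b(h)}$ precedes $\mathrm{p}^{a(k)}$ in $o$). $\widehat G_\infty(o)=-\big|H_{ab}(o)/k_{a,b}-H_{ba}(o)/k_{b,a}\big|$; for a full ordering ($i=n^a,j=n^b$) this equals $-\Delta\mathrm{xAUC}(o)$. xOrder with criterion $F$: $o^*(i,0)=(\mathrm{p}^{a(1)},\dots,\mathrm{p}^{a(i)})$, $o^*(0,j)=(\mathrm{p}^{b(1)},\dots,\mathrm{p}^{b(j)})$; for $i=1,\dots,n^a$ and $j=1,\dots,n^b$, with $c_a=o^*(i-1,j)\oplus\mathrm{p}^{a(i)}$ and $c_b=o^*(i,j-1)\oplus\mathrm{p}^{b(j)}$ ($\oplus$ = append at the bottom), set $o^*(i,j)=c_a$ if $F(c_a)>F(c_b)$ and $o^*(i,j)=c_b$ otherwise. Output $o^*(n^a,n^b)$. *)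

theory Defs
  imports Complex_Main
begin

text \<open>Samples have an abstract type 'u; labels are booleans (True = label 1, False = label 0).
  The within-group rankings are distinct lists pa, pb (top first); positions are 0-based,
  so pa ! k is the paper's p^{a(k+1)}.\<close>

definition precedes :: "'u list \<Rightarrow> 'u \<Rightarrow> 'u \<Rightarrow> bool" where
  "precedes os x y \<longleftrightarrow> (\<exists>us vs. os = us @ x # vs \<and> y \<in> set vs)"

definition n1 :: "('u \<Rightarrow> bool) \<Rightarrow> 'u list \<Rightarrow> nat" where
  "n1 Y p = length (filter Y p)"

definition n0 :: "('u \<Rightarrow> bool) \<Rightarrow> 'u list \<Rightarrow> nat" where
  "n0 Y p = length (filter (\<lambda>u. \<not> Y u) p)"

definition Hab :: "('u \<Rightarrow> bool) \<Rightarrow> 'u list \<Rightarrow> 'u list \<Rightarrow> nat \<Rightarrow> nat \<Rightarrow> 'u list \<Rightarrow> nat" where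
  "Hab Y pa pb i j os = card {(k, h). k < i \<and> h < length pb \<and> Y (pa ! k) \<and> \<not> Y (pb ! h) \<and>
       (j \<le> h \<or> (h < j \<and> precedes os (pa ! k) (pb ! h)))}"

definition Hba :: "('u \<Rightarrow> bool) \<Rightarrow> 'u list \<Rightarrow> 'u list \<Rightarrow> nat \<Rightarrow> nat \<Rightarrow> 'u list \<Rightarrow> nat" where
  "Hba Y pa pb i j os = card {(h, k). h < j \<and> k < length pa \<and> Y (pb ! h) \<and> \<not> Y (pa ! k) \<and>
       (i \<le> k \<or> (k < i \<and> precedes os (pb ! h) (pa ! k)))}"

definition Ghat_inf :: "('u \<Rightarrow> bool) \<Rightarrow> 'u list \<Rightarrow> 'u list \<Rightarrow> nat \<Rightarrow> nat \<Rightarrow> 'u list \<Rightarrow> real" where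
  "Ghat_inf Y pa pb i j os =
     - \<bar>real (Hab Y pa pb i j os) / real (n1 Y pa * n0 Y pb)
        - real (Hba Y pa pb i j os) / real (n0 Y pa * n1 Y pb)\<bar>"

fun xOrder :: "(nat \<Rightarrow> nat \<Rightarrow> 'u list \<Rightarrow> real) \<Rightarrow> 'u list \<Rightarrow> 'u list \<Rightarrow> nat \<Rightarrow> nat \<Rightarrow> 'u list" where
  "xOrder F pa pb 0 j = take j pb"
| "xOrder F pa pb (Suc i) 0 = take (Suc i) pa"
| "xOrder F pa pb (Suc i) (Suc j) =
     (let ca = xOrder F pa pb i (Suc j) @ [pa ! i];
          cb = xOrder F pa pb (Suc i) j @ [pb ! j]
      in if F (Suc i) (Suc j) ca > F (Suc i) (Suc j) cb then ca else cb)"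

definition xAUC :: "('u \<Rightarrow> bool) \<Rightarrow> 'u list \<Rightarrow> 'u list \<Rightarrow> 'u list \<Rightarrow> real" where
  "xAUC Y p q os = real (card {(u, v). u \<in> set p \<and> Y u \<and> v \<in> set q \<and> \<not> Y v \<and> precedes os u v})
                  / real (n1 Y p * n0 Y q)"

definition Delta_xAUC :: "('u \<Rightarrow> bool) \<Rightarrow> 'u list \<Rightarrow> 'u list \<Rightarrow> 'u list \<Rightarrow> real" where
  "Delta_xAUC Y pa pb os = \<bar>xAUC Y pa pb os - xAUC Y pb pa os\<bar>"

end

theory Submission imports Defs begin

lemma abstract_key:
  fixes S al be :: "nat \<Rightarrow> nat \<Rightarrow> real" and M :: real
  assumes rowstep: "\<And>i. i < na \<Longrightarrow> S (Suc i) 0 = S i 0 + al i 0"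
    and colstep: "\<And>j. j < nb \<Longrightarrow> S 0 (Suc j) = S 0 j - be 0 j"
    and step: "\<And>i j. i < na \<Longrightarrow> j < nb \<Longrightarrow> S (Suc i) (Suc j) =
        (if \<bar>S i (Suc j) + al i (Suc j)\<bar> < \<bar>S (Suc i) j - be (Suc i) j\<bar>
         then S i (Suc j) + al i (Suc j) else S (Suc i) j - be (Suc i) j)"
    and alb: "\<And>i j. i < na \<Longrightarrow> j \<le> nb \<Longrightarrow> 0 \<le> al i j \<and> al i j \<le> M"
    and beb: "\<And>i j. i \<le> na \<Longrightarrow> j < nb \<Longrightarrow> 0 \<le> be i j \<and> be i j \<le> M"
  shows "\<And>i j. i \<le> na \<Longrightarrow> j \<le> nb \<Longrightarrow>
     (\<forall>j'. j = Suc j' \<longrightarrow> S i j < -M \<longrightarrow> S i j' - be i j' < -M) \<and>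
     (\<forall>i'. i = Suc i' \<longrightarrow> S i j > M \<longrightarrow> S i' j + al i' j > M)"
proof -
  fix i j
  show "i \<le> na \<Longrightarrow> j \<le> nb \<Longrightarrow>
     (\<forall>j'. j = Suc j' \<longrightarrow> S i j < -M \<longrightarrow> S i j' - be i j' < -M) \<and>
     (\<forall>i'. i = Suc i' \<longrightarrow> S i j > M \<longrightarrow> S i' j + al i' j > M)"
  proof (induction "i + j" arbitrary: i j rule: less_induct)
    case less
    show ?case
    proof (cases i)
      case 0
      then show ?thesis using colstep less.prems by auto
    next
      case (Suc i')
      note iS = Suc
      show ?thesis
      proof (cases j)
        case 0
        then show ?thesis using rowstep less.prems iS by auto
      next
        case (Suc j')
        define A where "A = S i' (Suc j') + al i' (Suc j')"
        define B where "B = S (Suc i') j' - be (Suc i') j'"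
        have Sij: "S i j = (if \<bar>A\<bar> < \<bar>B\<bar> then A else B)"
          using step[of i' j'] less.prems iS Suc A_def B_def by auto
        have R: "\<not> (A < -M \<and> B > M)"
        proof
          assume AB: "A < -M \<and> B > M"
          have "S i' (Suc j') < -M" using AB A_def alb[of i' "Suc j'"] less.prems iS Suc by auto
          moreover have "S (Suc i') j' > M" using AB B_def beb[of "Suc i'" j'] less.prems iS Suc by auto
          ultimately have "S i' j' - be i' j' < -M" "S i' j' + al i' j' > M"
            using less.hyps[of i' "Suc j'"] less.hyps[of "Suc i'" j'] less.prems iS Suc by auto
          moreover have "al i' j' \<le> M" "be i' j' \<le> M"
            using alb[of i' j'] beb[of i' j'] less.prems iS Suc by auto
          ultimately show False by linarith
        qed
        show ?thesis using Sij R iS Suc A_def B_def by (auto split: if_splits)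
      qed
    qed
  qed
qed

lemma abstract_bound:
  fixes S al be :: "nat \<Rightarrow> nat \<Rightarrow> real" and M :: real
  assumes S0: "S 0 0 = 0" and M0: "0 \<le> M"
    and rowstep: "\<And>i. i < na \<Longrightarrow> S (Suc i) 0 = S i 0 + al i 0"
    and colstep: "\<And>j. j < nb \<Longrightarrow> S 0 (Suc j) = S 0 j - be 0 j"
    and step: "\<And>i j. i < na \<Longrightarrow> j < nb \<Longrightarrow> S (Suc i) (Suc j) =
        (if \<bar>S i (Suc j) + al i (Suc j)\<bar> < \<bar>S (Suc i) j - be (Suc i) j\<bar>
         then S i (Suc j) + al i (Suc j) else S (Suc i) j - be (Suc i) j)"
    and alb: "\<And>i j. i < na \<Longrightarrow> j \<le> nb \<Longrightarrow> 0 \<le> al i j \<and> al i j \<le> M"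
    and beb: "\<And>i j. i \<le> na \<Longrightarrow> j < nb \<Longrightarrow> 0 \<le> be i j \<and> be i j \<le> M"
    and al0: "\<And>i. i < na \<Longrightarrow> al i nb = 0"
    and be0: "\<And>j. j < nb \<Longrightarrow> be na j = 0"
  shows "\<bar>S na nb\<bar> \<le> M"
proof -
  note key = abstract_key[OF rowstep colstep step alb beb]
  have r: "i \<le> na \<Longrightarrow> S i 0 \<ge> 0" for i
    by (induction i) (auto simp: S0 rowstep alb)
  have c: "j \<le> nb \<Longrightarrow> S 0 j \<le> 0" for j
    using beb by (induction j) (auto simp: S0 colstep, smt (verit) Suc_le_lessD le0)
  have low: "j \<le> nb \<Longrightarrow> S na j \<ge> -M" for j
  proof (induction j)
    case 0 then show ?case using r[of na] M0 by auto
  next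
    case (Suc j)
    show ?case
    proof (rule ccontr)
      assume "\<not> ?case"
      then have "S na j - be na j < -M" using key[where i=na and j="Suc j"] Suc.prems by auto
      then show False using Suc be0[of j] by auto
    qed
  qed
  have up: "i \<le> na \<Longrightarrow> S i nb \<le> M" for i
  proof (induction i)
    case 0 then show ?case using c[of nb] M0 by auto
  next
    case (Suc i)
    show ?case
    proof (rule ccontr)
      assume "\<not> ?case"
      then have "S i nb + al i nb > M" using key[where i="Suc i" and j=nb] Suc.prems by auto
      then show False using Suc al0[of i] by auto
    qed
  qed
  show ?thesis using low[of nb] up[of na] by auto
qed


lemma precedes_snoc:
  "precedes (os @ [z]) x y \<longleftrightarrow> precedes os x y \<or> (x \<in> set os \<and> y = z)"
proof
  assume "precedes (os @ [z]) x y"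
  then obtain us vs where e: "os @ [z] = us @ x # vs" and y: "y \<in> set vs"
    unfolding precedes_def by blast
  then have "vs \<noteq> []" by auto
  then obtain ws w where vs: "vs = ws @ [w]" by (cases vs rule: rev_exhaust) auto
  from e vs have os: "os = us @ x # ws" and zw: "z = w" by auto
  show "precedes os x y \<or> (x \<in> set os \<and> y = z)"
    using y vs os zw unfolding precedes_def by auto
next
  assume "precedes os x y \<or> (x \<in> set os \<and> y = z)"
  then show "precedes (os @ [z]) x y"
  proof
    assume "precedes os x y"
    then obtain us vs where "os = us @ x # vs" "y \<in> set vs" unfolding precedes_def by blast
    then show ?thesis unfolding precedes_def by (intro exI[of _ us] exI[of _ "vs @ [z]"]) auto
  next
    assume h: "x \<in> set os \<and> y = z"
    then obtain us vs where "os = us @ x # vs" by (meson split_list)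
    then show ?thesis using h unfolding precedes_def by (intro exI[of _ us] exI[of _ "vs @ [z]"]) auto
  qed
qed

lemma precedes_in: "precedes os x y \<Longrightarrow> x \<in> set os"
  unfolding precedes_def by auto

lemma Hba_Hab: "Hba Y pa pb i j os = Hab Y pb pa j i os"
  unfolding Hba_def Hab_def by simp

lemma Hab_snoc_a:
  assumes "i < length pa" "pa ! i \<notin> set os" "pa ! i \<notin> set pb"
  shows "Hab Y pa pb (Suc i) j (os @ [pa ! i]) = Hab Y pa pb i j os +
     (if Y (pa ! i) then card {h. j \<le> h \<and> h < length pb \<and> \<not> Y (pb ! h)} else 0)"
proof -
  define Old where "Old = {(k, h). k < i \<and> h < length pb \<and> Y (pa ! k) \<and> \<not> Y (pb ! h) \<and>
       (j \<le> h \<or> (h < j \<and> precedes os (pa ! k) (pb ! h)))}"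
  define E where "E = {(k, h). k = i \<and> Y (pa ! i) \<and> j \<le> h \<and> h < length pb \<and> \<not> Y (pb ! h)}"
  have ne: "\<And>h. h < length pb \<Longrightarrow> pb ! h \<noteq> pa ! i" using assms(3) nth_mem by metis
  have np: "\<And>y. \<not> precedes os (pa ! i) y" using assms(2) precedes_in by metis
  have eq: "{(k, h). k < Suc i \<and> h < length pb \<and> Y (pa ! k) \<and> \<not> Y (pb ! h) \<and>
       (j \<le> h \<or> (h < j \<and> precedes (os @ [pa ! i]) (pa ! k) (pb ! h)))} = Old \<union> E"
    unfolding Old_def E_def using ne np by (auto simp: precedes_snoc less_Suc_eq)
  have fO: "finite Old" by (rule finite_subset[of _ "{..<i} \<times> {..<length pb}"]) (auto simp: Old_def)
  have fE: "finite E" by (rule finite_subset[of _ "{i} \<times> {..<length pb}"]) (auto simp: E_def)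
  have dis: "Old \<inter> E = {}" unfolding Old_def E_def by auto
  have cE: "card E = (if Y (pa ! i) then card {h. j \<le> h \<and> h < length pb \<and> \<not> Y (pb ! h)} else 0)"
  proof (cases "Y (pa ! i)")
    case True
    have "E = (\<lambda>h. (i, h)) ` {h. j \<le> h \<and> h < length pb \<and> \<not> Y (pb ! h)}"
      unfolding E_def using True by auto
    then show ?thesis using True by (simp add: card_image inj_on_def)
  next
    case False
    then have "E = {}" unfolding E_def by auto
    then show ?thesis using False by simp
  qed
  show ?thesis unfolding Hab_def eq using card_Un_disjoint[OF fO fE dis] cE Old_def by simp
qed

lemma Hab_snoc_b:
  assumes "j < length pb" "distinct pb" "\<forall>k<i. pa ! k \<in> set os"
  shows "Hab Y pa pb i (Suc j) (os @ [pb ! j]) = Hab Y pa pb i j os"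
proof -
  have ne: "\<And>h. h < length pb \<Longrightarrow> pb ! h = pb ! j \<longleftrightarrow> h = j"
    using assms(1,2) nth_eq_iff_index_eq by metis
  show ?thesis unfolding Hab_def
    apply (rule arg_cong[where f=card])
    using ne assms(3) by (auto simp: precedes_snoc less_Suc_eq)
qed

lemma xOrder_set:
  "i \<le> length pa \<Longrightarrow> j \<le> length pb \<Longrightarrow>
   set (xOrder F pa pb i j) = set (take i pa) \<union> set (take j pb)"
proof (induction F pa pb i j rule: xOrder.induct)
  case (1 F pa pb j) then show ?case by simp
next
  case (2 F pa pb i) then show ?case by simp
next
  case (3 F pa pb i j)
  have a: "set (xOrder F pa pb i (Suc j)) = set (take i pa) \<union> set (take (Suc j) pb)"
    using 3 by simp
  have b: "set (xOrder F pa pb (Suc i) j) = set (take (Suc i) pa) \<union> set (take j pb)"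
    using 3 by simp
  have ta: "take (Suc i) pa = take i pa @ [pa ! i]" using 3 by (simp add: take_Suc_conv_app_nth)
  have tb: "take (Suc j) pb = take j pb @ [pb ! j]" using 3 by (simp add: take_Suc_conv_app_nth)
  show ?case using a b ta tb by (auto simp: Let_def)
qed

lemma xOrder_row: "xOrder F pa pb i 0 = take i pa"
  by (cases i) auto

lemma xOrder_col: "xOrder F pa pb 0 j = take j pb"
  by simp

lemma card_pairs:
  assumes "distinct p" "distinct q"
  shows "card {(u, v). u \<in> set p \<and> Y u \<and> v \<in> set q \<and> \<not> Y v \<and> R u v} =
         card {(k, h). k < length p \<and> h < length q \<and> Y (p ! k) \<and> \<not> Y (q ! h) \<and> R (p ! k) (q ! h)}"
proof -
  let ?I = "{(k, h). k < length p \<and> h < length q \<and> Y (p ! k) \<and> \<not> Y (q ! h) \<and> R (p ! k) (q ! h)}"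
  have img: "{(u, v). u \<in> set p \<and> Y u \<and> v \<in> set q \<and> \<not> Y v \<and> R u v} = (\<lambda>(k, h). (p ! k, q ! h)) ` ?I"
    by (auto simp: in_set_conv_nth image_iff)
  have inj: "inj_on (\<lambda>(k, h). (p ! k, q ! h)) ?I"
    using assms by (auto simp: inj_on_def nth_eq_iff_index_eq)
  show ?thesis unfolding img using card_image[OF inj] by simp
qed

lemma nth_notin_take: "distinct xs \<Longrightarrow> i < length xs \<Longrightarrow> xs ! i \<notin> set (take i xs)"
  using distinct_take[of xs "Suc i"] by (simp add: take_Suc_conv_app_nth)


theorem theorem1:
  fixes Y :: "'u \<Rightarrow> bool" and pa pb :: "'u list"
  assumes "distinct pa" and "distinct pb" and "set pa \<inter> set pb = {}"
    and "n1 Y pa \<ge> 1" and "n0 Y pa \<ge> 1" and "n1 Y pb \<ge> 1" and "n0 Y pb \<ge> 1"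
  shows "Delta_xAUC Y pa pb (xOrder (Ghat_inf Y pa pb) pa pb (length pa) (length pb))
           \<le> max (1 / real (n1 Y pa)) (1 / real (n1 Y pb))"
proof -
  note da = assms(1) and db = assms(2) and dj = assms(3)
  define na where "na = length pa"
  define nb where "nb = length pb"
  define kab where "kab = real (n1 Y pa * n0 Y pb)"
  define kba where "kba = real (n0 Y pa * n1 Y pb)"
  define M where "M = max (1 / real (n1 Y pa)) (1 / real (n1 Y pb))"
  define ord where "ord = xOrder (Ghat_inf Y pa pb) pa pb"
  define val where "val i j os = real (Hab Y pa pb i j os) / kab - real (Hba Y pa pb i j os) / kba" for i j os
  define S where "S i j = val i j (ord i j)" for i j
  define al where "al i j = (if Y (pa ! i) then real (card {h. j \<le> h \<and> h < nb \<and> \<not> Y (pb ! h)}) else 0) / kab" for i j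
  define be where "be i j = (if Y (pb ! j) then real (card {k. i \<le> k \<and> k < na \<and> \<not> Y (pa ! k)}) else 0) / kba" for i j
  have kab0: "kab > 0" using assms(4,7) unfolding kab_def by simp
  have kba0: "kba > 0" using assms(5,6) unfolding kba_def by simp
  have G: "Ghat_inf Y pa pb i j os = - \<bar>val i j os\<bar>" for i j os
    unfolding Ghat_inf_def val_def kab_def kba_def by simp
  have oset: "i \<le> na \<Longrightarrow> j \<le> nb \<Longrightarrow> set (ord i j) = set (take i pa) \<union> set (take j pb)" for i j
    unfolding ord_def na_def nb_def by (rule xOrder_set)
  have stepA: "i < na \<Longrightarrow> j \<le> nb \<Longrightarrow> val (Suc i) j (ord i j @ [pa ! i]) = S i j + al i j" for i j
  proof -
    assume i: "i < na" and j: "j \<le> nb"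
    have nin: "pa ! i \<notin> set (ord i j)"
    proof -
      have "pa ! i \<notin> set (take i pa)" using nth_notin_take da i na_def by auto
      moreover have "pa ! i \<notin> set (take j pb)" using dj i na_def nth_mem in_set_takeD by fastforce
      ultimately show ?thesis using oset[of i j] i j by auto
    qed
    have nin2: "pa ! i \<notin> set pb" using dj i na_def nth_mem by fastforce
    have inb: "\<forall>k<j. pb ! k \<in> set (ord i j)" using oset[of i j] i j nb_def
      by (auto simp: in_set_conv_nth)
    have h1: "Hab Y pa pb (Suc i) j (ord i j @ [pa ! i]) = Hab Y pa pb i j (ord i j) +
       (if Y (pa ! i) then card {h. j \<le> h \<and> h < length pb \<and> \<not> Y (pb ! h)} else 0)"
      using Hab_snoc_a[OF _ nin nin2] i na_def by simp
    have h2: "Hba Y pa pb (Suc i) j (ord i j @ [pa ! i]) = Hba Y pa pb i j (ord i j)"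
      unfolding Hba_Hab using Hab_snoc_b[OF _ da inb] i na_def by simp
    show ?thesis unfolding S_def val_def h1 h2 al_def nb_def
      by (simp add: add_divide_distrib)
  qed
  have stepB: "i \<le> na \<Longrightarrow> j < nb \<Longrightarrow> val i (Suc j) (ord i j @ [pb ! j]) = S i j - be i j" for i j
  proof -
    assume i: "i \<le> na" and j: "j < nb"
    have nin: "pb ! j \<notin> set (ord i j)"
    proof -
      have "pb ! j \<notin> set (take j pb)" using nth_notin_take db j nb_def by auto
      moreover have "pb ! j \<notin> set (take i pa)" using dj j nb_def nth_mem in_set_takeD by fastforce
      ultimately show ?thesis using oset[of i j] i j by auto
    qed
    have nin2: "pb ! j \<notin> set pa" using dj j nb_def nth_mem by fastforce
    have ina: "\<forall>k<i. pa ! k \<in> set (ord i j)" using oset[of i j] i j na_def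
      by (auto simp: in_set_conv_nth)
    have h1: "Hba Y pa pb i (Suc j) (ord i j @ [pb ! j]) = Hba Y pa pb i j (ord i j) +
       (if Y (pb ! j) then card {h. i \<le> h \<and> h < length pa \<and> \<not> Y (pa ! h)} else 0)"
      unfolding Hba_Hab using Hab_snoc_a[OF _ nin nin2] j nb_def by simp
    have h2: "Hab Y pa pb i (Suc j) (ord i j @ [pb ! j]) = Hab Y pa pb i j (ord i j)"
      using Hab_snoc_b[OF _ db ina] j nb_def by simp
    show ?thesis unfolding S_def val_def h1 h2 be_def na_def
      by (simp add: add_divide_distrib)
  qed
  have bnd: "\<bar>S na nb\<bar> \<le> M"
  proof (rule abstract_bound[where al=al and be=be])
    show "S 0 0 = 0" unfolding S_def val_def ord_def Hab_def Hba_def by simp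
    show "0 \<le> M" unfolding M_def by (simp add: le_max_iff_disj)
    show "S (Suc i) 0 = S i 0 + al i 0" if "i < na" for i
    proof -
      have "ord (Suc i) 0 = ord i 0 @ [pa ! i]" unfolding ord_def xOrder_row using that na_def
        by (simp add: take_Suc_conv_app_nth)
      then show ?thesis using stepA[of i 0] that S_def by simp
    qed
    show "S 0 (Suc j) = S 0 j - be 0 j" if "j < nb" for j
    proof -
      have "ord 0 (Suc j) = ord 0 j @ [pb ! j]" unfolding ord_def xOrder_col using that nb_def
        by (simp add: take_Suc_conv_app_nth)
      then show ?thesis using stepB[of 0 j] that S_def by simp
    qed
    show "S (Suc i) (Suc j) =
        (if \<bar>S i (Suc j) + al i (Suc j)\<bar> < \<bar>S (Suc i) j - be (Suc i) j\<bar>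
         then S i (Suc j) + al i (Suc j) else S (Suc i) j - be (Suc i) j)" if "i < na" "j < nb" for i j
    proof -
      have "ord (Suc i) (Suc j) = (if Ghat_inf Y pa pb (Suc i) (Suc j) (ord i (Suc j) @ [pa ! i])
             > Ghat_inf Y pa pb (Suc i) (Suc j) (ord (Suc i) j @ [pb ! j])
           then ord i (Suc j) @ [pa ! i] else ord (Suc i) j @ [pb ! j])"
        unfolding ord_def by (simp add: Let_def)
      then have e: "ord (Suc i) (Suc j) = (if \<bar>S i (Suc j) + al i (Suc j)\<bar> < \<bar>S (Suc i) j - be (Suc i) j\<bar>
           then ord i (Suc j) @ [pa ! i] else ord (Suc i) j @ [pb ! j])"
        unfolding G using stepA[of i "Suc j"] stepB[of "Suc i" j] that by simp
      show ?thesis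
        using stepA[of i "Suc j"] stepB[of "Suc i" j] that unfolding S_def[of "Suc i" "Suc j"] e
        by (simp add: S_def)
    qed
    show "0 \<le> al i j \<and> al i j \<le> M" if "i < na" "j \<le> nb" for i j
    proof -
      have "card {h. j \<le> h \<and> h < nb \<and> \<not> Y (pb ! h)} \<le> card {h. h < nb \<and> \<not> Y (pb ! h)}"
        by (rule card_mono) auto
      also have "\<dots> = n0 Y pb" unfolding n0_def nb_def by (simp add: length_filter_conv_card)
      finally have c: "real (card {h. j \<le> h \<and> h < nb \<and> \<not> Y (pb ! h)}) \<le> real (n0 Y pb)" by simp
      have "real (n0 Y pb) / kab = 1 / real (n1 Y pa)" unfolding kab_def using assms(7) by simp
      then have "al i j \<le> 1 / real (n1 Y pa)" unfolding al_def
        using c kab0 divide_right_mono[OF c, of kab] by auto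
      moreover have "0 \<le> al i j" unfolding al_def using kab0 by simp
      ultimately show ?thesis unfolding M_def by auto
    qed
    show "0 \<le> be i j \<and> be i j \<le> M" if "i \<le> na" "j < nb" for i j
    proof -
      have "card {k. i \<le> k \<and> k < na \<and> \<not> Y (pa ! k)} \<le> card {k. k < na \<and> \<not> Y (pa ! k)}"
        by (rule card_mono) auto
      also have "\<dots> = n0 Y pa" unfolding n0_def na_def by (simp add: length_filter_conv_card)
      finally have c: "real (card {k. i \<le> k \<and> k < na \<and> \<not> Y (pa ! k)}) \<le> real (n0 Y pa)" by simp
      have "real (n0 Y pa) / kba = 1 / real (n1 Y pb)" unfolding kba_def using assms(5) by simp
      then have "be i j \<le> 1 / real (n1 Y pb)" unfolding be_def
        using c kba0 divide_right_mono[OF c, of kba] by auto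
      moreover have "0 \<le> be i j" unfolding be_def using kba0 by simp
      ultimately show ?thesis unfolding M_def by auto
    qed
    show "al i nb = 0" if "i < na" for i unfolding al_def by simp
    show "be na j = 0" if "j < nb" for j unfolding be_def by simp
  qed
  define ofin where "ofin = ord na nb"
  have x1: "xAUC Y pa pb ofin = real (Hab Y pa pb na nb ofin) / kab"
    unfolding xAUC_def kab_def Hab_def na_def nb_def
    by (subst card_pairs[OF da db]) (auto intro!: arg_cong[where f=card])
  have x2: "xAUC Y pb pa ofin = real (Hba Y pa pb na nb ofin) / kba"
    unfolding xAUC_def kba_def Hba_Hab Hab_def na_def nb_def
    by (subst card_pairs[OF db da]) (auto simp: mult.commute intro!: arg_cong[where f=card])
  have "Delta_xAUC Y pa pb ofin = \<bar>S na nb\<bar>"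
    unfolding Delta_xAUC_def x1 x2 by (simp add: S_def val_def ofin_def)
  then show ?thesis using bnd unfolding ofin_def ord_def na_def nb_def M_def by simp
qed

end
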